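(* Let $\Theta=((\lambda_a)_{a\in A_1},(\mu_a)_{a\in A_2},(\gamma_a)_{a\in A_3})$ be a tuple of partitions of multidegree $\bar r=(r_a)_{a\in A}$ (so $|\lambda_a|=r_a$ for $a\in A_1$, $|\mu_a|=r_a$ for $a\in A_2$, $|\gamma_a|=r_a$ for $a\in A_3$). If $\mathrm{Hom}_{H(\mathbf t)}(\Lambda_2(\Theta),\Lambda_1(\Theta))\neq0$, then $r_2=r_3$, where $r_2=\sum_{a\in A_2}r_a=|\mu_{A_2}|$ and $r_3=\sum_{a\in A_3}r_a=|\gamma_{A_3}|$. Moreover: (1) for every $i\in V_{ord}$, $\sum_{a\in A,\,t(a)=i}r_a=\sum_{a\in A,\,i(a)=i}r_a$; (2) for every $q\in\Omega$, $\sum_{a\in A,\,t(a)=i_q}r_a+\sum_{a\in A,\,i(a)=j_q}r_a=\sum_{a\in A,\,i(a)=i_q}r_a+\sum_{a\in A,\,t(a)=j_q}r_a$.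
   Context: $K$ is an algebraically closed field. $Q=(V,A,i,t)$ is a quiver ($i(a),t(a)$ origin and end of $a$) with partition $V=V_{ord}\sqcup\bigsqcup_{q\in\Omega}V_q$, $V_q=\{i_q,j_q\}$, and dimension vector $\mathbf d$ with $d_{i_q}=d_{j_q}=:d_q$. $E_i$ is a $K$-space of dimension $d_i$, identified with $K^{d_q}$ for $i\in V_q$; $W_i=E_i^*$ if $i=j_q$ for some $q$, else $W_i=E_i$. $H(\mathbf t)=\prod_{i\in V_{ord}}GL(E_i)\times\prod_{q\in\Omega}GL(d_q)$, where $GL(d_q)$ acts naturally on both $E_{i_q}=E_{j_q}=K^{d_q}$; it acts diagonally on tensor products. Standing assumption: there is no arrow $a$ with $W_{i(a)}=E_{i(a)}^*$ and $W_{t(a)}=E_{t(a)}^*$, so $A=A_1\sqcup A_2\sqcup A_3$ with $A_1=\{a: W_{i(a)}=E_{i(a)},W_{t(a)}=E_{t(a)}\}$, $A_2=\{a: W_{i(a)}=E_{i(a)},W_{t(a)}=E_{t(a)}^*\}$, $A_3=\{a: W_{i(a)}=E_{i(a)}^*,W_{t(a)}=E_{t(a)}\}$. A partition is a nonincreasing tuple of nonnegative integers; for $\lambda=(\lambda_1,\dots,\lambda_s)$, $\Lambda^\lambda(E)=\Lambda^{\lambda_1}(E)\otimes\cdots\otimes\Lambda^{\lambda_s}(E)$. Define $\Lambda_1(\Theta)=\bigotimes_{a\in A_1}\Lambda^{\lambda_a}(E_{i(a)})\otimes\bigotimes_{a\in A_2}\big(\Lambda^{\mu_a}(E_{t(a)})\otimes\Lambda^{\mu_a}(E_{i(a)})\big)$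 and $\Lambda_2(\Theta)=\bigotimes_{a\in A_1}\Lambda^{\lambda_a}(E_{t(a)})\otimes\bigotimes_{a\in A_3}\big(\Lambda^{\gamma_a}(E_{t(a)})\otimes\Lambda^{\gamma_a}(E_{i(a)})\big)$, as $H(\mathbf t)$-modules. *)

theory Defs
  imports "HOL-Computational_Algebra.Polynomial" "Jordan_Normal_Form.Determinant"
    "Jordan_Normal_Form.DL_Submatrix"
begin

definition is_partition :: "nat list \<Rightarrow> bool" where
  "is_partition lam = sorted_wrt (\<ge>) lam"

text \<open>Quiver with the vertex partition V = V_ord, {i_q, j_q} (q in Omega).
  V: vertices, A: arrows, src = i, tgt = t.\<close>
definition quiver_setup ::
  "'v set \<Rightarrow> 'e set \<Rightarrow> ('e \<Rightarrow> 'v) \<Rightarrow> ('e \<Rightarrow> 'v) \<Rightarrow> 'v set \<Rightarrow> 'q set \<Rightarrow> ('q \<Rightarrow> 'v) \<Rightarrow> ('q \<Rightarrow> 'v)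
   \<Rightarrow> ('v \<Rightarrow> nat) \<Rightarrow> bool" where
  "quiver_setup V A src tgt Vord \<Omega> iq jq d \<longleftrightarrow>
     finite V \<and> finite A \<and> finite \<Omega> \<and>
     (\<forall>a\<in>A. src a \<in> V \<and> tgt a \<in> V) \<and>
     V = Vord \<union> iq ` \<Omega> \<union> jq ` \<Omega> \<and>
     Vord \<inter> iq ` \<Omega> = {} \<and> Vord \<inter> jq ` \<Omega> = {} \<and> iq ` \<Omega> \<inter> jq ` \<Omega> = {} \<and>
     inj_on iq \<Omega> \<and> inj_on jq \<Omega> \<and>
     (\<forall>q\<in>\<Omega>. d (iq q) = d (jq q))"

text \<open>Standing assumption: no arrow with W_{i(a)} = E^* and W_{t(a)} = E^*
  (W_v = E_v^* exactly for v = j_q).\<close>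
definition standing_assumption ::
  "'e set \<Rightarrow> ('e \<Rightarrow> 'v) \<Rightarrow> ('e \<Rightarrow> 'v) \<Rightarrow> 'q set \<Rightarrow> ('q \<Rightarrow> 'v) \<Rightarrow> bool" where
  "standing_assumption A src tgt \<Omega> jq \<longleftrightarrow>
     (\<forall>a\<in>A. \<not> (src a \<in> jq ` \<Omega> \<and> tgt a \<in> jq ` \<Omega>))"

definition arrowsA1 :: "'e set \<Rightarrow> ('e \<Rightarrow> 'v) \<Rightarrow> ('e \<Rightarrow> 'v) \<Rightarrow> 'q set \<Rightarrow> ('q \<Rightarrow> 'v) \<Rightarrow> 'e set" where
  "arrowsA1 A src tgt \<Omega> jq = {a\<in>A. src a \<notin> jq ` \<Omega> \<and> tgt a \<notin> jq ` \<Omega>}"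
definition arrowsA2 :: "'e set \<Rightarrow> ('e \<Rightarrow> 'v) \<Rightarrow> ('e \<Rightarrow> 'v) \<Rightarrow> 'q set \<Rightarrow> ('q \<Rightarrow> 'v) \<Rightarrow> 'e set" where
  "arrowsA2 A src tgt \<Omega> jq = {a\<in>A. src a \<notin> jq ` \<Omega> \<and> tgt a \<in> jq ` \<Omega>}"
definition arrowsA3 :: "'e set \<Rightarrow> ('e \<Rightarrow> 'v) \<Rightarrow> ('e \<Rightarrow> 'v) \<Rightarrow> 'q set \<Rightarrow> ('q \<Rightarrow> 'v) \<Rightarrow> 'e set" where
  "arrowsA3 A src tgt \<Omega> jq = {a\<in>A. src a \<in> jq ` \<Omega> \<and> tgt a \<notin> jq ` \<Omega>}"

text \<open>The group H(t), realised as families g of invertible d_v x d_v matrices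
  (g v acting on E_v = K^{d_v}) subject to g(i_q) = g(j_q): GL(d_q) acting naturally on
  both E_{i_q} and E_{j_q}; g v for v in V_ord arbitrary in GL(E_v).\<close>
definition Hgroup :: "'v set \<Rightarrow> 'q set \<Rightarrow> ('q \<Rightarrow> 'v) \<Rightarrow> ('q \<Rightarrow> 'v) \<Rightarrow> ('v \<Rightarrow> nat)
    \<Rightarrow> ('v \<Rightarrow> 'k::field mat) set" where
  "Hgroup V \<Omega> iq jq d = {g. (\<forall>v\<in>V. g v \<in> carrier_mat (d v) (d v) \<and> det (g v) \<noteq> 0)
        \<and> (\<forall>q\<in>\<Omega>. g (iq q) = g (jq q))}"

text \<open>A tensor product of exterior powers  (x)_{x in F} Lambda^{dg x}(E_{vt x}).
  Standard basis: e_{f} = (x)_x (wedge of e_i, i in f x), f x a dg x-subset of {0..<d(vt x)}.\<close>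
definition ext_basis :: "('v \<Rightarrow> nat) \<Rightarrow> 'x set \<Rightarrow> ('x \<Rightarrow> 'v) \<Rightarrow> ('x \<Rightarrow> nat)
    \<Rightarrow> ('x \<Rightarrow> nat set) set" where
  "ext_basis d F vt dg = {f. (\<forall>x\<in>F. f x \<subseteq> {..<d (vt x)} \<and> card (f x) = dg x)
        \<and> (\<forall>x. x \<notin> F \<longrightarrow> f x = {})}"

text \<open>Matrix coefficient (row f, column f') of the action of g on that tensor product:
  Lambda^k(g) e_J = sum_I det(g[I,J]) e_I, and tensor products act factorwise.\<close>
definition ext_act :: "('v \<Rightarrow> 'k::field mat) \<Rightarrow> 'x set \<Rightarrow> ('x \<Rightarrow> 'v)
    \<Rightarrow> ('x \<Rightarrow> nat set) \<Rightarrow> ('x \<Rightarrow> nat set) \<Rightarrow> 'k" where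
  "ext_act g F vt f f' = (\<Prod>x\<in>F. det (submatrix (g (vt x)) (f x) (f' x)))"

text \<open>Hom_H(M2, M1) \<noteq> 0 for M2 = (F2,vt2,dg2), M1 = (F1,vt1,dg1): there is a nonzero
  matrix Phi (rows: basis of M1, columns: basis of M2) intertwining the actions.\<close>
definition hom_nonzero :: "('v \<Rightarrow> 'k::field mat) set \<Rightarrow> ('v \<Rightarrow> nat)
    \<Rightarrow> 'x set \<Rightarrow> ('x \<Rightarrow> 'v) \<Rightarrow> ('x \<Rightarrow> nat)
    \<Rightarrow> 'y set \<Rightarrow> ('y \<Rightarrow> 'v) \<Rightarrow> ('y \<Rightarrow> nat) \<Rightarrow> bool" where
  "hom_nonzero H d F2 vt2 dg2 F1 vt1 dg1 \<longleftrightarrow>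
     (\<exists>Phi :: ('y \<Rightarrow> nat set) \<Rightarrow> ('x \<Rightarrow> nat set) \<Rightarrow> 'k.
        (\<exists>B\<in>ext_basis d F1 vt1 dg1. \<exists>C\<in>ext_basis d F2 vt2 dg2. Phi B C \<noteq> 0) \<and>
        (\<forall>g\<in>H. \<forall>B\<in>ext_basis d F1 vt1 dg1. \<forall>C\<in>ext_basis d F2 vt2 dg2.
           (\<Sum>B'\<in>ext_basis d F1 vt1 dg1. ext_act g F1 vt1 B B' * Phi B' C)
         = (\<Sum>C'\<in>ext_basis d F2 vt2 dg2. Phi B C' * ext_act g F2 vt2 C' C)))"

text \<open>Factors of Lambda_1(Theta), labelled (a, n, side):
  a in A1: Lambda^{lambda_a!n}(E_{i(a)})  (side True);
  a in A2: Lambda^{mu_a!n}(E_{t(a)}) (side True) and Lambda^{mu_a!n}(E_{i(a)}) (side False).\<close>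
definition Lam1_factors :: "'e set \<Rightarrow> ('e \<Rightarrow> 'v) \<Rightarrow> ('e \<Rightarrow> 'v) \<Rightarrow> 'q set \<Rightarrow> ('q \<Rightarrow> 'v)
    \<Rightarrow> ('e \<Rightarrow> nat list) \<Rightarrow> ('e \<times> nat \<times> bool) set" where
  "Lam1_factors A src tgt \<Omega> jq \<theta> =
     {(a, n, True) | a n. a \<in> arrowsA1 A src tgt \<Omega> jq \<and> n < length (\<theta> a)} \<union>
     {(a, n, s) | a n s. a \<in> arrowsA2 A src tgt \<Omega> jq \<and> n < length (\<theta> a)}"
definition Lam1_vert :: "'e set \<Rightarrow> ('e \<Rightarrow> 'v) \<Rightarrow> ('e \<Rightarrow> 'v) \<Rightarrow> 'q set \<Rightarrow> ('q \<Rightarrow> 'v)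
    \<Rightarrow> ('e \<times> nat \<times> bool) \<Rightarrow> 'v" where
  "Lam1_vert A src tgt \<Omega> jq x = (case x of (a, n, s) \<Rightarrow>
     if a \<in> arrowsA2 A src tgt \<Omega> jq \<and> s then tgt a else src a)"

text \<open>Factors of Lambda_2(Theta):
  a in A1: Lambda^{lambda_a!n}(E_{t(a)}) (side True);
  a in A3: Lambda^{gamma_a!n}(E_{t(a)}) (side True) and Lambda^{gamma_a!n}(E_{i(a)}) (side False).\<close>
definition Lam2_factors :: "'e set \<Rightarrow> ('e \<Rightarrow> 'v) \<Rightarrow> ('e \<Rightarrow> 'v) \<Rightarrow> 'q set \<Rightarrow> ('q \<Rightarrow> 'v)
    \<Rightarrow> ('e \<Rightarrow> nat list) \<Rightarrow> ('e \<times> nat \<times> bool) set" where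
  "Lam2_factors A src tgt \<Omega> jq \<theta> =
     {(a, n, True) | a n. a \<in> arrowsA1 A src tgt \<Omega> jq \<and> n < length (\<theta> a)} \<union>
     {(a, n, s) | a n s. a \<in> arrowsA3 A src tgt \<Omega> jq \<and> n < length (\<theta> a)}"
definition Lam2_vert :: "'e set \<Rightarrow> ('e \<Rightarrow> 'v) \<Rightarrow> ('e \<Rightarrow> 'v) \<Rightarrow> 'q set \<Rightarrow> ('q \<Rightarrow> 'v)
    \<Rightarrow> ('e \<times> nat \<times> bool) \<Rightarrow> 'v" where
  "Lam2_vert A src tgt \<Omega> jq x = (case x of (a, n, s) \<Rightarrow>
     if a \<in> arrowsA3 A src tgt \<Omega> jq \<and> \<not> s then src a else tgt a)"

definition Lam_deg :: "('e \<Rightarrow> nat list) \<Rightarrow> ('e \<times> nat \<times> bool) \<Rightarrow> nat" where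
  "Lam_deg \<theta> x = (case x of (a, n, s) \<Rightarrow> \<theta> a ! n)"

end

theory Submission
  imports Defs
begin

lemma det_zero_row:
  fixes A :: "'a::comm_ring_1 mat"
  assumes "A \<in> carrier_mat n n" "k < n" "\<And>j. j < n \<Longrightarrow> A $$ (k,j) = 0"
  shows "det A = 0"
proof -
  have "(\<Prod>i = 0..<n. A $$ (i, p i)) = 0" if p: "p permutes {0..<n}" for p
  proof (rule prod_zero)
    show "\<exists>i\<in>{0..<n}. A $$ (i, p i) = 0"
      using assms(2) assms(3)[of "p k"] permutes_in_image[OF p] by auto
  qed simp
  thus ?thesis using assms(1) unfolding det_def by auto
qed

lemma pick_inj_lt:
  assumes "i < card S" "j < card S" "pick S i = pick S j" shows "i = j"
  using card_pick_le[OF assms(1)] card_pick_le[OF assms(2)] assms(3) by metis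

lemma submatrix_scalar_same:
  fixes c :: "'a::comm_ring_1"
  assumes "I \<subseteq> {..<n}"
  shows "det (submatrix (c \<cdot>\<^sub>m 1\<^sub>m n) I I) = c ^ card I"
proof -
  have fin: "finite I" using assms finite_subset by blast
  have cI: "{i. i < n \<and> i \<in> I} = I" using assms by auto
  have "submatrix (c \<cdot>\<^sub>m 1\<^sub>m n) I I = c \<cdot>\<^sub>m 1\<^sub>m (card I)"
  proof (rule eq_matI)
    fix i j assume i: "i < dim_row (c \<cdot>\<^sub>m 1\<^sub>m (card I))" and j: "j < dim_col (c \<cdot>\<^sub>m 1\<^sub>m (card I))"
    hence i': "i < card I" and j': "j < card I" by auto
    have pi: "pick I i < n" "pick I j < n" using pick_in_set_le[OF i'] pick_in_set_le[OF j'] assms by auto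
    have "submatrix (c \<cdot>\<^sub>m 1\<^sub>m n) I I $$ (i, j) = (c \<cdot>\<^sub>m 1\<^sub>m n) $$ (pick I i, pick I j)"
      by (rule submatrix_index) (use i' j' cI in auto)
    also have "\<dots> = c * (if pick I i = pick I j then 1 else 0)" using pi by simp
    also have "\<dots> = c * (if i = j then 1 else 0)" using pick_inj_lt[OF i' j'] by auto
    finally show "submatrix (c \<cdot>\<^sub>m 1\<^sub>m n) I I $$ (i, j) = (c \<cdot>\<^sub>m 1\<^sub>m (card I)) $$ (i, j)"
      using i' j' by simp
  qed (auto simp: dim_submatrix cI)
  thus ?thesis by simp
qed

lemma submatrix_scalar_diff:
  fixes c :: "'a::comm_ring_1"
  assumes "I \<subseteq> {..<n}" "J \<subseteq> {..<n}" "card I = card J" "I \<noteq> J"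
  shows "det (submatrix (c \<cdot>\<^sub>m 1\<^sub>m n) I J) = 0"
proof -
  have finI: "finite I" and finJ: "finite J" using assms finite_subset by auto
  have cI: "{i. i < n \<and> i \<in> I} = I" and cJ: "{i. i < n \<and> i \<in> J} = J" using assms by auto
  obtain i where i: "i \<in> I" "i \<notin> J"
    using assms card_subset_eq[OF finJ, of I] by blast
  define k where "k = card {a\<in>I. a < i}"
  have pk: "pick I k = i" unfolding k_def by (rule pick_card_in_set[OF i(1)])
  have "{a\<in>I. a < i} \<subset> I" using i by auto
  hence k: "k < card I" unfolding k_def using finI psubset_card_mono by blast
  show ?thesis
  proof (rule det_zero_row)
    show "submatrix (c \<cdot>\<^sub>m 1\<^sub>m n) I J \<in> carrier_mat (card I) (card I)"
    proof -
      have dr: "dim_row (c \<cdot>\<^sub>m 1\<^sub>m n) = n" "dim_col (c \<cdot>\<^sub>m 1\<^sub>m n) = n" by simp_all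
      have "dim_row (submatrix (c \<cdot>\<^sub>m 1\<^sub>m n) I J) = card I" unfolding dim_submatrix dr cI ..
      moreover have "dim_col (submatrix (c \<cdot>\<^sub>m 1\<^sub>m n) I J) = card I" unfolding dim_submatrix dr cJ assms(3) ..
      ultimately show ?thesis unfolding carrier_mat_def by blast
    qed
    show "k < card I" by fact
    fix j assume j: "j < card I"
    hence j': "j < card J" using assms by simp
    have pj: "pick J j \<in> J" "pick J j < n" using pick_in_set_le[OF j'] assms by auto
    have "submatrix (c \<cdot>\<^sub>m 1\<^sub>m n) I J $$ (k, j) = (c \<cdot>\<^sub>m 1\<^sub>m n) $$ (pick I k, pick J j)"
      by (rule submatrix_index) (use k j' cI cJ in auto)
    also have "\<dots> = 0"
    proof -
      have "pick I k < n" "pick I k \<noteq> pick J j" using pk pj i assms(1) by auto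
      thus ?thesis using pj by simp
    qed
    finally show "submatrix (c \<cdot>\<^sub>m 1\<^sub>m n) I J $$ (k, j) = 0" .
  qed
qed


lemma pow_distinct:
  assumes "n \<noteq> m"
  shows "\<exists>t::'k::alg_closed_field. t \<noteq> 0 \<and> t ^ n \<noteq> t ^ m"
proof -
  { fix n m :: nat assume "m < n"
    then obtain k where k: "n = m + k" "k > 0" by (metis less_imp_add_positive)
    define f :: "nat \<Rightarrow> 'k" where "f = (\<lambda>j. (if j = k+1 then 1 else 0) - (if j = 1 then 1 else 0) - (if j = 0 then 1 else 0))"
    have "f (k+1) \<noteq> 0" using k by (simp add: f_def)
    then obtain y :: 'k where y: "(\<Sum>j\<le>k+1. f j * y ^ j) = 0" using alg_closed[of "k+1" f] by auto
    have "(\<Sum>j\<le>k+1. f j * y ^ j) = y^(k+1) - y - 1"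
    proof -
      have d: "\<And>a. (\<Sum>j\<le>k+1. (if j = a then 1 else 0) * y ^ j) = (if a \<le> k+1 then y^a else 0)"
      proof -
        fix a
        have "(\<Sum>j\<le>k+1. (if j = a then 1 else 0) * y ^ j) = (\<Sum>j\<le>k+1. if j = a then y^a else 0)"
          by (rule sum.cong) auto
        also have "\<dots> = (if a \<le> k+1 then y^a else 0)" by (simp only: sum.delta finite_atMost atMost_iff)
        finally show "(\<Sum>j\<le>k+1. (if j = a then 1 else 0) * y ^ j) = (if a \<le> k+1 then y^a else 0)" .
      qed
      have "(\<Sum>j\<le>k+1. f j * y ^ j) = (\<Sum>j\<le>k+1. (if j = k+1 then 1 else 0) * y ^ j) - (\<Sum>j\<le>k+1. (if j = 1 then 1 else 0) * y ^ j) - (\<Sum>j\<le>k+1. (if j = 0 then 1 else 0) * y ^ j)"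
        unfolding f_def left_diff_distrib sum_subtractf ..
      also have "\<dots> = y^(k+1) - y - 1" unfolding d using k by simp
      finally show ?thesis .
    qed
    with y have y1: "y^(k+1) = y + 1" by (simp add: algebra_simps)
    have y0: "y \<noteq> 0" using y1 k by auto
    have "y ^ k \<noteq> 1"
    proof
      assume "y ^ k = 1" hence "y^(k+1) = y" by simp
      with y1 show False by simp
    qed
    hence "y ^ n \<noteq> y ^ m" using k y0 by (simp add: power_add)
    with y0 have "\<exists>t::'k. t \<noteq> 0 \<and> t ^ n \<noteq> t ^ m" by blast }
  note * = this
  show ?thesis using assms *[of m n] *[of n m] by (metis linorder_neqE_nat)
qed


lemma finite_ext_basis:
  assumes "finite F"
  shows "finite (ext_basis d F vt dg)"
proof -
  let ?P = "PiE F (\<lambda>x. Pow {..<d (vt x)})"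
  have fin: "finite ?P" using assms by (intro finite_PiE) auto
  have "ext_basis d F vt dg \<subseteq> (\<lambda>h x. if x \<in> F then h x else {}) ` ?P"
  proof
    fix f assume f: "f \<in> ext_basis d F vt dg"
    have "f = (\<lambda>x. if x \<in> F then restrict f F x else {})"
      using f unfolding ext_basis_def by (intro ext) (auto simp: restrict_def)
    moreover have "restrict f F \<in> ?P" using f unfolding ext_basis_def by auto
    ultimately show "f \<in> (\<lambda>h x. if x \<in> F then h x else {}) ` ?P" by blast
  qed
  thus ?thesis using fin finite_subset by blast
qed

lemma ext_act_scalar:
  fixes c :: "'v \<Rightarrow> 'k::field"
  assumes fin: "finite F" and f: "f \<in> ext_basis d F vt dg" and f': "f' \<in> ext_basis d F vt dg"
    and g: "\<And>x. x \<in> F \<Longrightarrow> g (vt x) = c (vt x) \<cdot>\<^sub>m 1\<^sub>m (d (vt x))"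
  shows "ext_act g F vt f f' = (if f = f' then (\<Prod>x\<in>F. c (vt x) ^ dg x) else 0)"
proof (cases "f = f'")
  case True
  have "ext_act g F vt f f' = (\<Prod>x\<in>F. c (vt x) ^ dg x)"
    unfolding ext_act_def True
  proof (rule prod.cong[OF refl])
    fix x assume x: "x \<in> F"
    have "f' x \<subseteq> {..<d (vt x)}" "card (f' x) = dg x" using f' x unfolding ext_basis_def by auto
    thus "det (submatrix (g (vt x)) (f' x) (f' x)) = c (vt x) ^ dg x"
      using g[OF x] submatrix_scalar_same by metis
  qed
  thus ?thesis using True by simp
next
  case False
  then obtain x where x: "f x \<noteq> f' x" by (meson ext)
  have xF: "x \<in> F" using x f f' unfolding ext_basis_def by auto
  have "det (submatrix (g (vt x)) (f x) (f' x)) = 0"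
    unfolding g[OF xF] by (rule submatrix_scalar_diff) (use f f' xF x in \<open>auto simp: ext_basis_def\<close>)
  hence "ext_act g F vt f f' = 0" unfolding ext_act_def using xF fin by (intro prod_zero) auto
  thus ?thesis using False by simp
qed

lemma prod_weight:
  fixes t :: "'k::comm_ring_1"
  assumes "finite F"
  shows "(\<Prod>x\<in>F. (if vt x \<in> S then t else 1) ^ dg x) = t ^ (\<Sum>x\<in>{x\<in>F. vt x \<in> S}. dg x)"
proof -
  have "(\<Prod>x\<in>F. (if vt x \<in> S then t else 1) ^ dg x) = (\<Prod>x\<in>F. t ^ (if vt x \<in> S then dg x else 0))"
    by (rule prod.cong) auto
  also have "\<dots> = t ^ (\<Sum>x\<in>F. if vt x \<in> S then dg x else 0)" by (simp add: power_sum)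
  also have "(\<Sum>x\<in>F. if vt x \<in> S then dg x else 0) = (\<Sum>x\<in>{x\<in>F. vt x \<in> S}. dg x)"
    using assms by (simp add: sum.inter_filter)
  finally show ?thesis .
qed

lemma hom_weight:
  fixes H :: "('v \<Rightarrow> 'k::alg_closed_field mat) set" and F1 :: "'y set" and F2 :: "'x set"
  assumes hom: "hom_nonzero H d F2 vt2 dg2 F1 vt1 dg1" and fin1: "finite F1" and fin2: "finite F2"
    and inH: "\<And>t. t \<noteq> 0 \<Longrightarrow> (\<lambda>w. (if w \<in> S then t else 1) \<cdot>\<^sub>m 1\<^sub>m (d w)) \<in> H"
  shows "(\<Sum>x\<in>{x\<in>F1. vt1 x \<in> S}. dg1 x) = (\<Sum>x\<in>{x\<in>F2. vt2 x \<in> S}. dg2 x)"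
proof (rule ccontr)
  let ?N1 = "\<Sum>x\<in>{x\<in>F1. vt1 x \<in> S}. dg1 x" and ?N2 = "\<Sum>x\<in>{x\<in>F2. vt2 x \<in> S}. dg2 x"
  assume "?N1 \<noteq> ?N2"
  then obtain t :: 'k where t: "t \<noteq> 0" "t ^ ?N1 \<noteq> t ^ ?N2" using pow_distinct by blast
  obtain Phi :: "('y \<Rightarrow> nat set) \<Rightarrow> ('x \<Rightarrow> nat set) \<Rightarrow> 'k" and B C where
    B: "B \<in> ext_basis d F1 vt1 dg1" and C: "C \<in> ext_basis d F2 vt2 dg2" and nz: "Phi B C \<noteq> 0" and
    int: "\<And>g B C. g \<in> H \<Longrightarrow> B \<in> ext_basis d F1 vt1 dg1 \<Longrightarrow> C \<in> ext_basis d F2 vt2 dg2 \<Longrightarrow>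
           (\<Sum>B'\<in>ext_basis d F1 vt1 dg1. ext_act g F1 vt1 B B' * Phi B' C)
         = (\<Sum>C'\<in>ext_basis d F2 vt2 dg2. Phi B C' * ext_act g F2 vt2 C' C)"
    using hom unfolding hom_nonzero_def by blast
  define g where "g = (\<lambda>w. (if w \<in> S then t else 1) \<cdot>\<^sub>m 1\<^sub>m (d w))"
  define c where "c = (\<lambda>w. if w \<in> S then t else 1)"
  have gc: "\<And>w. g w = c w \<cdot>\<^sub>m 1\<^sub>m (d w)" unfolding g_def c_def by simp
  have "(\<Sum>B'\<in>ext_basis d F1 vt1 dg1. ext_act g F1 vt1 B B' * Phi B' C)
      = (\<Sum>B'\<in>ext_basis d F1 vt1 dg1. (if B = B' then (\<Prod>x\<in>F1. c (vt1 x) ^ dg1 x) * Phi B' C else 0))"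
    by (rule sum.cong[OF refl]) (simp add: ext_act_scalar[OF fin1 B _ gc])
  also have "\<dots> = (\<Prod>x\<in>F1. c (vt1 x) ^ dg1 x) * Phi B C"
    using finite_ext_basis[OF fin1, of d vt1 dg1] B by (simp add: sum.delta sum.delta')
  also have "(\<Prod>x\<in>F1. c (vt1 x) ^ dg1 x) = t ^ ?N1" unfolding c_def by (rule prod_weight[OF fin1])
  finally have L: "(\<Sum>B'\<in>ext_basis d F1 vt1 dg1. ext_act g F1 vt1 B B' * Phi B' C) = t ^ ?N1 * Phi B C" .
  have "(\<Sum>C'\<in>ext_basis d F2 vt2 dg2. Phi B C' * ext_act g F2 vt2 C' C)
      = (\<Sum>C'\<in>ext_basis d F2 vt2 dg2. (if C' = C then Phi B C' * (\<Prod>x\<in>F2. c (vt2 x) ^ dg2 x) else 0))"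
    by (rule sum.cong[OF refl]) (simp add: ext_act_scalar[OF fin2 _ C gc])
  also have "\<dots> = Phi B C * (\<Prod>x\<in>F2. c (vt2 x) ^ dg2 x)"
    using finite_ext_basis[OF fin2, of d vt2 dg2] C by (simp add: sum.delta sum.delta')
  also have "(\<Prod>x\<in>F2. c (vt2 x) ^ dg2 x) = t ^ ?N2" unfolding c_def by (rule prod_weight[OF fin2])
  finally have R: "(\<Sum>C'\<in>ext_basis d F2 vt2 dg2. Phi B C' * ext_act g F2 vt2 C' C) = Phi B C * t ^ ?N2" .
  have "g \<in> H" unfolding g_def using inH[OF t(1)] .
  from int[OF this B C] have "t ^ ?N1 * Phi B C = Phi B C * t ^ ?N2" unfolding L R .
  with nz t(2) show False by simp
qed


lemma fac_sum:
  assumes "finite X"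
  shows "(\<Sum>x\<in>{(a, n, b) | a n. a \<in> X \<and> n < length (\<theta> a)}. Lam_deg \<theta> x) = (\<Sum>a\<in>X. sum_list (\<theta> a))"
proof -
  have eq: "{(a, n, b) | a n. a \<in> X \<and> n < length (\<theta> a)} = (\<lambda>(a,n). (a,n,b)) ` Sigma X (\<lambda>a. {..<length (\<theta> a)})"
    by auto
  have inj: "inj_on (\<lambda>(a,n). (a,n,b)) (Sigma X (\<lambda>a. {..<length (\<theta> a)}))" by (auto simp: inj_on_def)
  have "(\<Sum>x\<in>{(a, n, b) | a n. a \<in> X \<and> n < length (\<theta> a)}. Lam_deg \<theta> x)
      = (\<Sum>(a,n)\<in>Sigma X (\<lambda>a. {..<length (\<theta> a)}). \<theta> a ! n)"
    unfolding eq by (subst sum.reindex[OF inj]) (auto simp: Lam_deg_def intro!: sum.cong)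
  also have "\<dots> = (\<Sum>a\<in>X. \<Sum>n<length (\<theta> a). \<theta> a ! n)"
    using assms by (subst sum.Sigma) auto
  also have "\<dots> = (\<Sum>a\<in>X. sum_list (\<theta> a))"
    by (rule sum.cong[OF refl]) (simp add: sum_list_sum_nth atLeast0LessThan)
  finally show ?thesis .
qed

lemma finite_facs:
  assumes "finite A"
  shows "finite {(a, n, b::bool) | a n b. a \<in> A \<and> n < length (\<theta> a)}"
proof -
  have eq: "{(a, n, b::bool) | a n b. a \<in> A \<and> n < length (\<theta> a)} = (\<lambda>((a,n),b). (a,n,b)) ` (Sigma A (\<lambda>a. {..<length (\<theta> a)}) \<times> UNIV)"
    by force
  have fX: "finite (Sigma A (\<lambda>a. {..<length (\<theta> a)}) \<times> (UNIV :: bool set))" using assms by auto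
  show ?thesis unfolding eq by (rule finite_imageI[OF fX])
qed

lemma finite_Lam:
  assumes "finite A"
  shows "finite (Lam1_factors A src tgt \<Omega> jq \<theta>)" "finite (Lam2_factors A src tgt \<Omega> jq \<theta>)"
proof -
  have "Lam1_factors A src tgt \<Omega> jq \<theta> \<subseteq> {(a, n, b) | a n b. a \<in> A \<and> n < length (\<theta> a)}"
    unfolding Lam1_factors_def arrowsA1_def arrowsA2_def by auto
  thus "finite (Lam1_factors A src tgt \<Omega> jq \<theta>)" using finite_facs[OF assms] finite_subset by blast
  have "Lam2_factors A src tgt \<Omega> jq \<theta> \<subseteq> {(a, n, b) | a n b. a \<in> A \<and> n < length (\<theta> a)}"
    unfolding Lam2_factors_def arrowsA1_def arrowsA3_def by auto
  thus "finite (Lam2_factors A src tgt \<Omega> jq \<theta>)" using finite_facs[OF assms] finite_subset by blast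
qed

lemma weights:
  fixes V :: "'v set" and A :: "'e set" and src tgt :: "'e \<Rightarrow> 'v"
    and Vord :: "'v set" and \<Omega> :: "'q set" and iq jq :: "'q \<Rightarrow> 'v"
    and d :: "'v \<Rightarrow> nat" and \<theta> :: "'e \<Rightarrow> nat list" and r :: "'e \<Rightarrow> nat"
  assumes quiv: "quiver_setup V A src tgt Vord \<Omega> iq jq d"
    and multideg: "\<forall>a\<in>A. sum_list (\<theta> a) = r a"
    and hom: "hom_nonzero (Hgroup V \<Omega> iq jq d :: ('v \<Rightarrow> 'k::alg_closed_field mat) set) d
               (Lam2_factors A src tgt \<Omega> jq \<theta>) (Lam2_vert A src tgt \<Omega> jq) (Lam_deg \<theta>)
               (Lam1_factors A src tgt \<Omega> jq \<theta>) (Lam1_vert A src tgt \<Omega> jq) (Lam_deg \<theta>)"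
    and Scl: "\<forall>q\<in>\<Omega>. (iq q \<in> S \<longleftrightarrow> jq q \<in> S)"
  shows "sum r {a\<in>arrowsA1 A src tgt \<Omega> jq. src a \<in> S} + sum r {a\<in>arrowsA2 A src tgt \<Omega> jq. tgt a \<in> S}
       + sum r {a\<in>arrowsA2 A src tgt \<Omega> jq. src a \<in> S}
       = sum r {a\<in>arrowsA1 A src tgt \<Omega> jq. tgt a \<in> S} + sum r {a\<in>arrowsA3 A src tgt \<Omega> jq. tgt a \<in> S}
       + sum r {a\<in>arrowsA3 A src tgt \<Omega> jq. src a \<in> S}"
proof -
  let ?A1 = "arrowsA1 A src tgt \<Omega> jq" and ?A2 = "arrowsA2 A src tgt \<Omega> jq" and ?A3 = "arrowsA3 A src tgt \<Omega> jq"
  have finA: "finite A" using quiv unfolding quiver_setup_def by auto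
  have f1: "finite ?A1" "finite ?A2" "finite ?A3" using finA unfolding arrowsA1_def arrowsA2_def arrowsA3_def by auto
  have sr: "\<And>X. X \<subseteq> A \<Longrightarrow> (\<Sum>a\<in>X. sum_list (\<theta> a)) = sum r X" using multideg by (auto intro!: sum.cong)
  let ?P = "\<lambda>X b. {(a, n, b) | a n. a \<in> X \<and> n < length (\<theta> a)}"
  have inH: "(\<lambda>w. (if w \<in> S then t else 1) \<cdot>\<^sub>m 1\<^sub>m (d w)) \<in> (Hgroup V \<Omega> iq jq d :: ('v \<Rightarrow> 'k mat) set)"
    if t: "t \<noteq> 0" for t :: 'k
  proof -
    have dq: "\<forall>q\<in>\<Omega>. d (iq q) = d (jq q)" using quiv unfolding quiver_setup_def by blast
    have "(if w \<in> S then t else 1) \<noteq> 0" for w using t by simp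
    hence "\<forall>v\<in>V. (if v \<in> S then t else 1) \<cdot>\<^sub>m 1\<^sub>m (d v) \<in> carrier_mat (d v) (d v) \<and> det ((if v \<in> S then t else 1) \<cdot>\<^sub>m 1\<^sub>m (d v)) \<noteq> 0"
      by (simp only: det_smult det_one) simp
    moreover have "\<forall>q\<in>\<Omega>. (if iq q \<in> S then t else 1) \<cdot>\<^sub>m 1\<^sub>m (d (iq q)) = (if jq q \<in> S then t else 1) \<cdot>\<^sub>m 1\<^sub>m (d (jq q))"
      using dq Scl by metis
    ultimately show ?thesis unfolding Hgroup_def by blast
  qed
  note eq = hom_weight[OF hom finite_Lam(1)[OF finA] finite_Lam(2)[OF finA] inH]
  have s1: "{x\<in>Lam1_factors A src tgt \<Omega> jq \<theta>. Lam1_vert A src tgt \<Omega> jq x \<in> S}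
      = ?P {a\<in>?A1. src a \<in> S} True \<union> ?P {a\<in>?A2. tgt a \<in> S} True \<union> ?P {a\<in>?A2. src a \<in> S} False"
    unfolding Lam1_factors_def Lam1_vert_def arrowsA1_def arrowsA2_def by (auto split: if_splits)
  have s2: "{x\<in>Lam2_factors A src tgt \<Omega> jq \<theta>. Lam2_vert A src tgt \<Omega> jq x \<in> S}
      = ?P {a\<in>?A1. tgt a \<in> S} True \<union> ?P {a\<in>?A3. tgt a \<in> S} True \<union> ?P {a\<in>?A3. src a \<in> S} False"
    unfolding Lam2_factors_def Lam2_vert_def arrowsA1_def arrowsA3_def by (auto split: if_splits)
  have fP: "\<And>X (b::bool). X \<subseteq> A \<Longrightarrow> finite (?P X b)"
  proof -
    fix X and b :: bool assume "X \<subseteq> A"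
    thus "finite (?P X b)" by (intro finite_subset[OF _ finite_facs[OF finA, of \<theta>]]) auto
  qed
  have d12: "?A1 \<inter> ?A2 = {}" "?A1 \<inter> ?A3 = {}" unfolding arrowsA1_def arrowsA2_def arrowsA3_def by auto
  have sub: "?A1 \<subseteq> A" "?A2 \<subseteq> A" "?A3 \<subseteq> A" unfolding arrowsA1_def arrowsA2_def arrowsA3_def by auto
  have fX: "\<And>X. X \<subseteq> A \<Longrightarrow> finite X" using finA finite_subset by blast
  have L: "(\<Sum>x\<in>{x\<in>Lam1_factors A src tgt \<Omega> jq \<theta>. Lam1_vert A src tgt \<Omega> jq x \<in> S}. Lam_deg \<theta> x)
     = sum r {a\<in>?A1. src a \<in> S} + sum r {a\<in>?A2. tgt a \<in> S} + sum r {a\<in>?A2. src a \<in> S}"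
    unfolding s1
    apply (subst sum.union_disjoint, (rule finite_UnI)?, (rule fP, use sub in blast)+, use d12 in blast)+
    apply (subst fac_sum sr, (rule fX)?, use sub in blast)+
    apply (rule refl)
    done
  have R: "(\<Sum>x\<in>{x\<in>Lam2_factors A src tgt \<Omega> jq \<theta>. Lam2_vert A src tgt \<Omega> jq x \<in> S}. Lam_deg \<theta> x)
     = sum r {a\<in>?A1. tgt a \<in> S} + sum r {a\<in>?A3. tgt a \<in> S} + sum r {a\<in>?A3. src a \<in> S}"
    unfolding s2
    apply (subst sum.union_disjoint, (rule finite_UnI)?, (rule fP, use sub in blast)+, use d12 in blast)+
    apply (subst fac_sum sr, (rule fX)?, use sub in blast)+
    apply (rule refl)
    done
  show ?thesis using eq L R by simp
qed


lemma part3: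
  assumes finA: "finite A" and standing: "standing_assumption A src tgt \<Omega> jq"
  shows "sum r {a\<in>A. P a} = sum r {a\<in>arrowsA1 A src tgt \<Omega> jq. P a} + sum r {a\<in>arrowsA2 A src tgt \<Omega> jq. P a}
     + sum r {a\<in>arrowsA3 A src tgt \<Omega> jq. P a}"
proof -
  have eq: "{a\<in>A. P a} = ({a\<in>arrowsA1 A src tgt \<Omega> jq. P a} \<union> {a\<in>arrowsA2 A src tgt \<Omega> jq. P a})
     \<union> {a\<in>arrowsA3 A src tgt \<Omega> jq. P a}"
    using standing unfolding standing_assumption_def arrowsA1_def arrowsA2_def arrowsA3_def by auto
  show ?thesis unfolding eq
    by (subst sum.union_disjoint; use finA in \<open>auto simp: arrowsA1_def arrowsA2_def arrowsA3_def\<close>)+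
qed

theorem lemma2p2:
  fixes V :: "'v set" and A :: "'e set" and src tgt :: "'e \<Rightarrow> 'v"
    and Vord :: "'v set" and \<Omega> :: "'q set" and iq jq :: "'q \<Rightarrow> 'v"
    and d :: "'v \<Rightarrow> nat" and \<theta> :: "'e \<Rightarrow> nat list" and r :: "'e \<Rightarrow> nat"
  assumes quiv: "quiver_setup V A src tgt Vord \<Omega> iq jq d"
    and standing: "standing_assumption A src tgt \<Omega> jq"
    and parts: "\<forall>a\<in>A. is_partition (\<theta> a)"
    and multideg: "\<forall>a\<in>A. sum_list (\<theta> a) = r a"
    and hom: "hom_nonzero (Hgroup V \<Omega> iq jq d :: ('v \<Rightarrow> 'k::alg_closed_field mat) set) d
               (Lam2_factors A src tgt \<Omega> jq \<theta>) (Lam2_vert A src tgt \<Omega> jq) (Lam_deg \<theta>)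
               (Lam1_factors A src tgt \<Omega> jq \<theta>) (Lam1_vert A src tgt \<Omega> jq) (Lam_deg \<theta>)"
  shows "(\<Sum>a\<in>arrowsA2 A src tgt \<Omega> jq. r a) = (\<Sum>a\<in>arrowsA3 A src tgt \<Omega> jq. r a)
     \<and> (\<forall>v\<in>Vord. (\<Sum>a\<in>{a\<in>A. tgt a = v}. r a) = (\<Sum>a\<in>{a\<in>A. src a = v}. r a))
     \<and> (\<forall>q\<in>\<Omega>. (\<Sum>a\<in>{a\<in>A. tgt a = iq q}. r a) + (\<Sum>a\<in>{a\<in>A. src a = jq q}. r a)
              = (\<Sum>a\<in>{a\<in>A. src a = iq q}. r a) + (\<Sum>a\<in>{a\<in>A. tgt a = jq q}. r a))"
proof (intro conjI ballI)
  let ?A1 = "arrowsA1 A src tgt \<Omega> jq" and ?A2 = "arrowsA2 A src tgt \<Omega> jq" and ?A3 = "arrowsA3 A src tgt \<Omega> jq"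
  have finA: "finite A" using quiv unfolding quiver_setup_def by auto
  have inV: "\<forall>a\<in>A. src a \<in> V \<and> tgt a \<in> V" using quiv unfolding quiver_setup_def by auto
  have Vq: "\<forall>q\<in>\<Omega>. iq q \<in> V \<and> jq q \<in> V" using quiv unfolding quiver_setup_def by auto
  note part = part3[OF finA standing, of r]
  note W = weights[OF quiv multideg hom]
  {
    have w: "sum r {a\<in>?A1. src a \<in> V} + sum r {a\<in>?A2. tgt a \<in> V} + sum r {a\<in>?A2. src a \<in> V}
       = sum r {a\<in>?A1. tgt a \<in> V} + sum r {a\<in>?A3. tgt a \<in> V} + sum r {a\<in>?A3. src a \<in> V}"
      using W[of V] Vq by blast
    have e: "{a\<in>?A1. src a \<in> V} = ?A1" "{a\<in>?A1. tgt a \<in> V} = ?A1"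
       "{a\<in>?A2. src a \<in> V} = ?A2" "{a\<in>?A2. tgt a \<in> V} = ?A2"
       "{a\<in>?A3. src a \<in> V} = ?A3" "{a\<in>?A3. tgt a \<in> V} = ?A3"
      using inV unfolding arrowsA1_def arrowsA2_def arrowsA3_def by auto
    show "sum r ?A2 = sum r ?A3" using w unfolding e by simp
  }
  {
    fix v assume v: "v \<in> Vord"
    have nj: "v \<notin> jq ` \<Omega>" "v \<notin> iq ` \<Omega>" using quiv v unfolding quiver_setup_def by auto
    have w: "sum r {a\<in>?A1. src a \<in> {v}} + sum r {a\<in>?A2. tgt a \<in> {v}} + sum r {a\<in>?A2. src a \<in> {v}}
       = sum r {a\<in>?A1. tgt a \<in> {v}} + sum r {a\<in>?A3. tgt a \<in> {v}} + sum r {a\<in>?A3. src a \<in> {v}}"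
      using W[of "{v}"] nj by blast
    have e: "{a\<in>?A2. tgt a = v} = {}" "{a\<in>?A3. src a = v} = {}"
      using nj unfolding arrowsA2_def arrowsA3_def by auto
    show "sum r {a\<in>A. tgt a = v} = sum r {a\<in>A. src a = v}"
      using w unfolding part[of "\<lambda>a. tgt a = v"] part[of "\<lambda>a. src a = v"] by (simp add: e)
  }
  {
    fix q assume q: "q \<in> \<Omega>"
    let ?S = "{iq q, jq q}"
    have ij: "iq q \<notin> jq ` \<Omega>" "jq q \<in> jq ` \<Omega>" using quiv q unfolding quiver_setup_def by auto
    have Scl: "\<forall>q'\<in>\<Omega>. (iq q' \<in> ?S \<longleftrightarrow> jq q' \<in> ?S)"
    proof
      fix q' assume q': "q' \<in> \<Omega>"
      have "iq q' \<noteq> jq q" "jq q' \<noteq> iq q" using quiv q q' unfolding quiver_setup_def by blast+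
      moreover have "iq q' = iq q \<longleftrightarrow> q' = q" "jq q' = jq q \<longleftrightarrow> q' = q"
        using quiv q q' unfolding quiver_setup_def inj_on_def by blast+
      ultimately show "iq q' \<in> ?S \<longleftrightarrow> jq q' \<in> ?S" by auto
    qed
    have w: "sum r {a\<in>?A1. src a \<in> ?S} + sum r {a\<in>?A2. tgt a \<in> ?S} + sum r {a\<in>?A2. src a \<in> ?S}
       = sum r {a\<in>?A1. tgt a \<in> ?S} + sum r {a\<in>?A3. tgt a \<in> ?S} + sum r {a\<in>?A3. src a \<in> ?S}"
      using W[OF Scl] .
    have e: "{a\<in>?A1. src a \<in> ?S} = {a\<in>?A1. src a = iq q}"
      "{a\<in>?A2. tgt a \<in> ?S} = {a\<in>?A2. tgt a = jq q}"
      "{a\<in>?A2. src a \<in> ?S} = {a\<in>?A2. src a = iq q}"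
      "{a\<in>?A1. tgt a \<in> ?S} = {a\<in>?A1. tgt a = iq q}"
      "{a\<in>?A3. tgt a \<in> ?S} = {a\<in>?A3. tgt a = iq q}"
      "{a\<in>?A3. src a \<in> ?S} = {a\<in>?A3. src a = jq q}"
      using ij unfolding arrowsA1_def arrowsA2_def arrowsA3_def by auto
    have z: "{a\<in>?A3. src a = iq q} = {}" "{a\<in>?A1. tgt a = jq q} = {}" "{a\<in>?A3. tgt a = jq q} = {}"
      "{a\<in>?A2. tgt a = iq q} = {}" "{a\<in>?A1. src a = jq q} = {}" "{a\<in>?A2. src a = jq q} = {}"
      using ij unfolding arrowsA1_def arrowsA2_def arrowsA3_def by auto
    show "sum r {a\<in>A. tgt a = iq q} + sum r {a\<in>A. src a = jq q} = sum r {a\<in>A. src a = iq q} + sum r {a\<in>A. tgt a = jq q}"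
      using w unfolding e part[of "\<lambda>a. tgt a = iq q"] part[of "\<lambda>a. src a = jq q"]
        part[of "\<lambda>a. src a = iq q"] part[of "\<lambda>a. tgt a = jq q"] z by simp
  }
qed

end
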